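(* Let $\rho(x)=1/\sqrt{1-(x/2)^2}$ for $x\in(-2,2)$, and let $F\in C_c(\mathbb{R})$ with $F\ge0$ and $F(x)\le F(y)$ whenever $|x|>|y|$. Then there exist constants $C$ and $n_0$ such that for all $n\ge n_0$, $$\sup_{|\mu|<2}\int_{-2}^{2}F\bigl(n\rho(x)(x-\mu)\bigr)\rho(x)\,dx\le\frac Cn.$$ *)

theory Defs
  imports "HOL-Analysis.Analysis"
begin

definition rho :: "real \<Rightarrow> real" where
  "rho x = 1 / sqrt (1 - (x / 2)^2)"

definition Cc :: "(real \<Rightarrow> real) \<Rightarrow> bool" where
  "Cc F \<longleftrightarrow> continuous_on UNIV F \<and> compact (closure (support_on UNIV F))"

end

theory Submission
  imports Defs
begin

lemma jordan: assumes "0 \<le> y" "y \<le> pi/2" shows "2*y/pi \<le> sin y"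
proof -
  have conc: "concave_on {0..pi} sin"
    by (rule f''_le0_imp_concave[where f' = cos and f'' = "\<lambda>x. - sin x"])
       (auto intro!: derivative_eq_intros sin_ge_zero)
  define t where "t = 2*y/pi"
  have t: "0 \<le> t" "t \<le> 1" using assms pi_gt_zero unfolding t_def by (auto simp: field_simps)
  have "(1 - t) * sin 0 + t * sin (pi/2) \<le> sin ((1 - t) *\<^sub>R 0 + t *\<^sub>R (pi/2))"
    by (rule concave_onD[OF conc]) (use t in auto)
  moreover have "t *\<^sub>R (pi/2) = y" unfolding t_def by simp
  ultimately show ?thesis unfolding t_def by simp
qed

lemma jordan_abs: assumes "\<bar>y\<bar> \<le> pi/2" shows "2*\<bar>y\<bar>/pi \<le> \<bar>sin y\<bar>"
proof (cases "y \<ge> 0")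
  case True then show ?thesis using jordan[of y] assms by auto
next
  case False then show ?thesis using jordan[of "-y"] assms by auto
qed

lemma key:
  assumes x: "-2 < x" "x < 2" and m: "-2 < m" "m < 2"
  shows "\<bar>arcsin (x/2) - arcsin (m/2)\<bar> \<le> pi/2 * (rho x * \<bar>x - m\<bar>)"
proof -
  define th where "th = arcsin (x/2)"
  define ph where "ph = arcsin (m/2)"
  have thb: "-(pi/2) < th" "th < pi/2" using arcsin_lt_bounded[of "x/2"] x unfolding th_def by auto
  have phb: "-(pi/2) < ph" "ph < pi/2" using arcsin_lt_bounded[of "m/2"] m unfolding ph_def by auto
  have sx: "sin th = x/2" using x unfolding th_def by simp
  have sm: "sin ph = m/2" using m unfolding ph_def by simp
  have cth: "cos th = sqrt (1 - (x/2)^2)" using x unfolding th_def by (simp add: cos_arcsin)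
  have cthp: "cos th > 0" using cos_gt_zero_pi thb by auto
  have cphp: "cos ph > 0" using cos_gt_zero_pi phb by auto
  have rx: "rho x = 1 / cos th" unfolding rho_def cth ..
  define c where "c = cos ((th + ph)/2)"
  define s where "s = \<bar>sin ((th - ph)/2)\<bar>"
  have cp: "c > 0" unfolding c_def using thb phb by (intro cos_gt_zero_pi) auto
  have "x - m = 2 * (sin th - sin ph)" using sx sm by simp
  also have "\<dots> = 4 * sin ((th - ph)/2) * c" unfolding sin_diff_sin c_def by simp
  finally have xm: "\<bar>x - m\<bar> = 4 * s * c" unfolding s_def using cp by (simp add: abs_mult)
  have "cos th + cos ph = 2 * c * cos ((th - ph)/2)" unfolding cos_plus_cos c_def ..
  also have "\<dots> \<le> 2 * c" using cp by (simp add: mult_left_le)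
  finally have cle: "cos th \<le> 2 * c" using cphp by linarith
  have "rho x * \<bar>x - m\<bar> = 4 * s * c / cos th" unfolding rx xm by simp
  also have "\<dots> \<ge> 4 * s * c / (2 * c)"
    using cle cthp cp by (intro divide_left_mono) (auto simp: s_def)
  finally have r1: "rho x * \<bar>x - m\<bar> \<ge> 2 * s" using cp by simp
  have "2 * \<bar>(th - ph)/2\<bar> / pi \<le> s" unfolding s_def using thb phb by (intro jordan_abs) auto
  then have "\<bar>th - ph\<bar> \<le> pi * s" using pi_gt_zero by (simp add: field_simps)
  moreover have "pi * (2 * s) \<le> pi * (rho x * \<bar>x - m\<bar>)" using r1 pi_gt_zero by (intro mult_left_mono) auto
  moreover have "2 * \<bar>th - ph\<bar> \<le> pi * (2 * s)" using \<open>\<bar>th - ph\<bar> \<le> pi * s\<close> by simp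
  ultimately have "2 * \<bar>th - ph\<bar> \<le> pi * (rho x * \<bar>x - m\<bar>)" by (meson order_trans)
  then have "\<bar>th - ph\<bar> \<le> pi/2 * (rho x * \<bar>x - m\<bar>)" by simp
  then show ?thesis unfolding th_def ph_def .
qed

lemma rho_nonneg: "\<bar>x\<bar> \<le> 2 \<Longrightarrow> rho x \<ge> 0"
proof -
  assume "\<bar>x\<bar> \<le> 2"
  then have "(x/2)\<^sup>2 \<le> 1" by (subst abs_square_le_1) simp
  then show ?thesis unfolding rho_def by simp
qed

lemma rho_int:
  assumes "-2 \<le> a" "a \<le> b" "b \<le> 2"
  shows "(rho has_integral (2*arcsin(b/2) - 2*arcsin(a/2))) {a..b}"
proof -
  have cont: "continuous_on {a..b} (\<lambda>x. 2 * arcsin (x / 2))"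
  proof -
    have "continuous_on {a..b} (\<lambda>x. arcsin (x / 2))"
      by (rule continuous_on_arcsin) (use assms in \<open>auto intro!: continuous_intros\<close>)
    then show ?thesis using continuous_on_mult[OF continuous_on_const[of _ 2]] by blast
  qed
  have der: "((\<lambda>x. 2 * arcsin (x / 2)) has_vector_derivative rho x) (at x)"
    if x: "x \<in> {a<..<b} - {}" for x
  proof -
    have d1: "((\<lambda>x. x/2) has_real_derivative 1/2) (at x)" by (rule derivative_eq_intros | simp)+
    have d2: "DERIV arcsin (x/2) :> inverse (sqrt (1 - (x/2)\<^sup>2))" using x assms by (intro DERIV_arcsin) auto
    have "((\<lambda>x. arcsin(x/2)) has_real_derivative (inverse (sqrt (1 - (x/2)\<^sup>2)) * (1/2))) (at x)"
      by (rule DERIV_chain2[OF d2 d1])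
    then have "((\<lambda>x. 2*arcsin(x/2)) has_real_derivative 2 * (inverse (sqrt (1 - (x/2)\<^sup>2)) * (1/2))) (at x)"
      by (rule DERIV_cmult)
    then show ?thesis
      unfolding rho_def has_real_derivative_iff_has_vector_derivative[symmetric] by (simp add: divide_simps)
  qed
  show ?thesis
    using fundamental_theorem_of_calculus_interior_strong[OF finite.emptyI \<open>a \<le> b\<close> der cont] by simp
qed


theorem lemma15:
  fixes F :: "real \<Rightarrow> real"
  assumes "Cc F"
    and "\<And>x. F x \<ge> 0"
    and "\<And>x y. \<bar>x\<bar> > \<bar>y\<bar> \<Longrightarrow> F x \<le> F y"
  shows "\<exists>C::real. \<exists>n0::nat. \<forall>n\<ge>n0.
           (\<forall>\<mu>\<in>{-2<..<2}.
             integral {-2<..<2} (\<lambda>x. F (real n * rho x * (x - \<mu>)) * rho x) \<le> C / real n)"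
proof -
  define K where "K = closure (support_on UNIV F)"
  have Kc: "compact K" and Fc: "continuous_on UNIV F" using assms(1) unfolding Cc_def K_def by auto
  have supp: "x \<in> K" if "F x \<noteq> 0" for x
    using that closure_subset[of "{x. F x \<noteq> 0}"] unfolding K_def support_on_def by auto
  obtain B where B: "\<And>x. x \<in> K \<Longrightarrow> norm x \<le> B"
    using compact_imp_bounded[OF Kc] unfolding bounded_iff by auto
  define R where "R = max B 1"
  have Rp: "R > 0" unfolding R_def by auto
  have FR: "F x = 0" if "R < \<bar>x\<bar>" for x
    using supp[of x] B[of x] that unfolding R_def by force
  have "compact (F ` K)" using compact_continuous_image[OF continuous_on_subset[OF Fc] Kc] by auto
  then obtain M0 where M0: "\<And>y. y \<in> F ` K \<Longrightarrow> norm y \<le> M0"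
    using compact_imp_bounded[OF \<open>compact (F ` K)\<close>] unfolding bounded_iff by blast
  define M where "M = max M0 0"
  have Mp: "M \<ge> 0" unfolding M_def by auto
  have FM: "F x \<le> M" for x
  proof (cases "x \<in> K")
    case True then show ?thesis using M0[of "F x"] unfolding M_def by auto
  next
    case False then show ?thesis using supp[of x] Mp by fastforce
  qed
  show ?thesis
  proof (intro exI[of _ "2*pi*R*M"] exI[of _ "1::nat"] allI impI ballI)
    fix n :: nat and \<mu> :: real
    assume n: "1 \<le> n" and mu: "\<mu> \<in> {-2<..<2}"
    have np: "real n > 0" using n by simp
    define ph where "ph = arcsin (\<mu>/2)"
    have phb: "-(pi/2) < ph" "ph < pi/2" using arcsin_lt_bounded[of "\<mu>/2"] mu unfolding ph_def by auto
    define d where "d = pi/2 * (R / real n)"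
    have dp: "d \<ge> 0" unfolding d_def using Rp np by auto
    define a' where "a' = max (ph - d) (-(pi/2))"
    define b' where "b' = min (ph + d) (pi/2)"
    have ab': "-(pi/2) \<le> a'" "a' \<le> b'" "b' \<le> pi/2" "b' - a' \<le> 2*d"
      unfolding a'_def b'_def using phb dp by (auto simp: max_def min_def)
    define a where "a = 2 * sin a'"
    define b where "b = 2 * sin b'"
    have ab: "-2 \<le> a" "a \<le> b" "b \<le> 2"
      unfolding a_def b_def using ab' sin_monotone_2pi_le[of a' b'] by auto
    define f where "f = (\<lambda>x. F (real n * rho x * (x - \<mu>)) * rho x)"
    define g where "g = (\<lambda>x. if x \<in> {a..b} then M * rho x else 0)"
    have fg: "f x \<le> g x" if x: "x \<in> {-2<..<2}" for x
    proof (cases "F (real n * rho x * (x - \<mu>)) = 0")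
      case True
      have "0 \<le> g x" unfolding g_def using rho_nonneg[of x] x Mp by auto
      then show ?thesis unfolding f_def True by simp
    next
      case False
      have r0: "rho x \<ge> 0" using rho_nonneg[of x] x by auto
      have "\<bar>real n * rho x * (x - \<mu>)\<bar> \<le> R" using FR False by force
      then have "real n * (rho x * \<bar>x - \<mu>\<bar>) \<le> R" using r0 np by (simp add: abs_mult)
      then have "rho x * \<bar>x - \<mu>\<bar> \<le> R / real n" using np by (simp add: field_simps)
      then have "pi/2 * (rho x * \<bar>x - \<mu>\<bar>) \<le> d" unfolding d_def by (intro mult_left_mono) auto
      moreover have "\<bar>arcsin (x/2) - ph\<bar> \<le> pi/2 * (rho x * \<bar>x - \<mu>\<bar>)"
        unfolding ph_def using x mu by (intro key) auto
      ultimately have th: "\<bar>arcsin (x/2) - ph\<bar> \<le> d" by linarith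
      have thb: "-(pi/2) < arcsin (x/2)" "arcsin (x/2) < pi/2" using arcsin_lt_bounded[of "x/2"] x by auto
      have "a' \<le> arcsin (x/2)" "arcsin (x/2) \<le> b'" unfolding a'_def b'_def using th thb by auto
      then have "sin a' \<le> sin (arcsin (x/2))" "sin (arcsin (x/2)) \<le> sin b'"
        using sin_monotone_2pi_le ab' thb by (meson less_imp_le)+
      then have "x \<in> {a..b}" unfolding a_def b_def using x by auto
      then have "g x = M * rho x" unfolding g_def by simp
      moreover have "f x \<le> M * rho x" unfolding f_def using FM r0 by (intro mult_right_mono) auto
      ultimately show ?thesis by simp
    qed
    have "((\<lambda>x. M * rho x) has_integral M * (2*arcsin(b/2) - 2*arcsin(a/2))) {a..b}"
      using rho_int[OF ab] by (rule has_integral_mult_right)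
    moreover have "arcsin (b/2) = b'" "arcsin (a/2) = a'"
      unfolding a_def b_def using ab' by (auto intro: arcsin_sin)
    ultimately have "((\<lambda>x. M * rho x) has_integral M * (2*b' - 2*a')) {a..b}" by simp
    then have "(g has_integral M * (2*b' - 2*a')) {-2..2}"
      unfolding g_def using ab by (subst has_integral_restrict) auto
    then have gi: "(g has_integral M * (2*b' - 2*a')) {-2<..<2}"
      using has_integral_open_interval[of g _ "-2::real" 2] by simp
    have bound: "M * (2*b' - 2*a') \<le> 2*pi*R*M / real n"
    proof -
      have "M * (2*b' - 2*a') \<le> M * (4*d)" using ab' Mp by (intro mult_left_mono) auto
      also have "\<dots> = 2*pi*R*M / real n" unfolding d_def by (simp add: field_simps)
      finally show ?thesis .
    qed
    show "integral {-2<..<2} (\<lambda>x. F (real n * rho x * (x - \<mu>)) * rho x) \<le> 2*pi*R*M / real n"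
    proof (cases "f integrable_on {-2<..<2}")
      case True
      have "integral {-2<..<2} f \<le> integral {-2<..<2} g"
        using True gi fg by (intro integral_le) auto
      also have "\<dots> = M * (2*b' - 2*a')" using gi by (rule integral_unique)
      finally show ?thesis using bound unfolding f_def by linarith
    next
      case False
      then have "integral {-2<..<2} f = 0" by (rule not_integrable_integral)
      moreover have "0 \<le> 2*pi*R*M / real n" using Rp Mp np by auto
      ultimately show ?thesis unfolding f_def by simp
    qed
  qed
qed

end
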